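(* Let $g\in(\frac12,1)$ and let $(Y_t)_{t\ge0}$ be a stable subordinator of index $g$ normalised by $\mathbb E[e^{-\lambda Y_t}]=e^{-t\lambda^g}$ for $\lambda,t>0$; let $p_t$ denote the density of $Y_t$. For $\ell_1,\ell_2>0$ set $$K(\ell_1,\ell_2)=\int_0^\infty \ell'\,\frac{p_{\ell_1}(\ell')}{\ell_1}\,\frac{p_{\ell_2}(\ell')}{\ell_2}\,d\ell'.$$ Then for every $\ell_1>0$ and $x\in\mathbb R\setminus\{0\}$, $$\int_0^\infty K(\ell_1,\ell_2)\,\ell_2^{ix}\,d\ell_2=\frac{\sinh(g\pi x)}{\sinh(\pi x)}\,\ell_1^{ix-1},$$ and for $x=0$ the left side equals $g\,\ell_1^{-1}$ (the limit of the right side). *)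

theory Defs
  imports "HOL-Analysis.Analysis"
begin

definition stable_subordinator_density :: "real \<Rightarrow> (real \<Rightarrow> real \<Rightarrow> real) \<Rightarrow> bool" where
  "stable_subordinator_density g p \<longleftrightarrow>
     (\<forall>t>0. p t \<in> borel_measurable lborel
        \<and> (\<forall>y. 0 \<le> p t y)
        \<and> integrable lborel (p t)
        \<and> (LINT y|lborel. p t y) = 1
        \<and> (\<forall>s>0. integrable lborel (\<lambda>y. exp (- s * y) * p t y)
               \<and> (LINT y|lborel. exp (- s * y) * p t y) = exp (- t * s powr g)))"

definition Kker :: "(real \<Rightarrow> real \<Rightarrow> real) \<Rightarrow> real \<Rightarrow> real \<Rightarrow> real" where
  "Kker p l1 l2 = (LINT l:{0<..}|lborel. l * (p l1 l / l1) * (p l2 l / l2))"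

end

theory Submission
  imports Defs
begin


lemma exp_nn_subst:
  fixes f :: "real \<Rightarrow> real"
  assumes [measurable]: "f \<in> borel_measurable borel" and nn: "\<And>y. 0 \<le> f y"
  shows "(\<integral>\<^sup>+y. f y * indicator {0<..} y \<partial>lborel) = (\<integral>\<^sup>+v. f (exp v) * exp v \<partial>lborel)"
proof -
  have sub: "(\<integral>\<^sup>+y. f y * indicator {exp (-real n)..exp (real n)} y \<partial>lborel) =
             (\<integral>\<^sup>+v. f (exp v) * exp v * indicator {-real n..real n} v \<partial>lborel)" for n :: nat
    by (rule nn_integral_substitution[where g=exp and g'=exp]) (auto simp: set_borel_measurable_def intro!: continuous_intros derivative_eq_intros)
  have L1: "(\<lambda>n. \<integral>\<^sup>+y. f y * indicator {exp (-real n)..exp (real n)} y \<partial>lborel) \<longlonglongrightarrow> (\<integral>\<^sup>+y. f y * indicator {0<..} y \<partial>lborel)"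
  proof -
    have "(\<lambda>n. \<integral>\<^sup>+y. ennreal (f y * indicator {exp (-real n)..exp (real n)} y) \<partial>lborel) \<longlonglongrightarrow> (\<integral>\<^sup>+y. (SUP n. ennreal (f y * indicator {exp (-real n)..exp (real n)} y)) \<partial>lborel)"
    proof (rule nn_integral_LIMSEQ)
      show "incseq (\<lambda>n y. ennreal (f y * indicator {exp (- real n)..exp (real n)} y))"
        unfolding incseq_def le_fun_def
      proof (intro allI impI)
        fix m n :: nat and y assume "m \<le> n"
        then have mn: "exp (- real n) \<le> exp (- real m)" "exp (real m) \<le> exp (real n)" by auto
        show "ennreal (f y * indicator {exp (- real m)..exp (real m)} y) \<le> ennreal (f y * indicator {exp (- real n)..exp (real n)} y)"
          by (intro ennreal_leI) (auto simp: indicator_def nn dest: order_trans[OF mn(1)] order_trans[OF _ mn(2)])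
      qed
      show "\<And>y. (\<lambda>n. ennreal (f y * indicator {exp (- real n)..exp (real n)} y)) \<longlonglongrightarrow> (SUP n. ennreal (f y * indicator {exp (-real n)..exp (real n)} y))"
        by (rule LIMSEQ_SUP) (use \<open>incseq _\<close> in \<open>auto simp: incseq_def le_fun_def\<close>)
    qed auto
    moreover have "(SUP n. ennreal (f y * indicator {exp (-real n)..exp (real n)} y)) = ennreal (f y * indicator {0<..} y)" for y
    proof (cases "y > 0")
      case True
      obtain n :: nat where n: "\<bar>ln y\<bar> \<le> real n" using real_arch_simple by blast
      have "y \<in> {exp (-real n)..exp (real n)}" using n True
        by (auto simp: abs_le_iff) (metis exp_le_cancel_iff exp_ln minus_le_iff, metis exp_le_cancel_iff exp_ln)
      moreover have "y \<in> {exp (-real m)..exp (real m)} \<Longrightarrow> y \<in> {0<..}" for m using True by auto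
      ultimately show ?thesis
        by (intro antisym SUP_least) (auto intro!: SUP_upper2[of n] simp: indicator_def nn True)
    next
      case False
      have ni: "y \<notin> {exp (-real m)..exp (real m)}" for m using False by (metis atLeastAtMost_iff exp_gt_zero less_le_trans)
      have e: "ennreal (f y * indicator {exp (-real m)..exp (real m)} y) = 0" for m using ni[of m] by simp
      show ?thesis unfolding e using False by (simp add: indicator_def)
    qed
    ultimately show ?thesis by simp
  qed
  have L2: "(\<lambda>n. \<integral>\<^sup>+v. f (exp v) * exp v * indicator {-real n..real n} v \<partial>lborel) \<longlonglongrightarrow> (\<integral>\<^sup>+v. f (exp v) * exp v \<partial>lborel)"
  proof -
    have "(\<lambda>n. \<integral>\<^sup>+v. ennreal (f (exp v) * exp v * indicator {-real n..real n} v) \<partial>lborel) \<longlonglongrightarrow> (\<integral>\<^sup>+v. (SUP n. ennreal (f (exp v) * exp v * indicator {-real n..real n} v)) \<partial>lborel)"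
    proof (rule nn_integral_LIMSEQ)
      show "incseq (\<lambda>n v. ennreal (f (exp v) * exp v * indicator {-real n..real n} v))"
        by (auto simp: incseq_def le_fun_def indicator_def nn intro!: ennreal_leI)
      show "\<And>v. (\<lambda>n. ennreal (f (exp v) * exp v * indicator {-real n..real n} v)) \<longlonglongrightarrow> (SUP n. ennreal (f (exp v) * exp v * indicator {-real n..real n} v))"
        by (rule LIMSEQ_SUP) (auto simp: incseq_def indicator_def nn intro!: ennreal_leI)
    qed auto
    moreover have "(SUP n. ennreal (f (exp v) * exp v * indicator {-real n..real n} v)) = ennreal (f (exp v) * exp v)" for v
    proof -
      obtain n :: nat where n: "\<bar>v\<bar> \<le> real n" using real_arch_simple by blast
      then show ?thesis
        by (intro antisym SUP_least) (auto intro!: SUP_upper2[of n] ennreal_leI simp: indicator_def nn abs_le_iff)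
    qed
    ultimately show ?thesis by simp
  qed
  show ?thesis using LIMSEQ_unique[OF L1[unfolded sub] L2] .
qed

lemma exp_measure_eq:
  "distr (density lborel (\<lambda>v. ennreal (exp v))) borel exp = density lborel (\<lambda>y. ennreal (indicator {0<..} y))"
proof (rule measure_eqI)
  fix A assume "A \<in> sets (distr (density lborel (\<lambda>v. ennreal (exp v))) borel exp)"
  then have A[measurable]: "A \<in> sets borel" by simp
  have "emeasure (distr (density lborel (\<lambda>v. ennreal (exp v))) borel exp) A
      = (\<integral>\<^sup>+v. ennreal (exp v) * indicator (exp -` A) v \<partial>lborel)"
  proof -
    have "{v. exp v \<in> A} \<in> sets borel" by measurable
    moreover have "exp -` A = {v. exp v \<in> A}" by auto
    ultimately have [measurable]: "exp -` A \<in> sets borel" by simp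
    show ?thesis by (subst emeasure_distr; simp) (subst emeasure_density; simp)
  qed
  also have "\<dots> = (\<integral>\<^sup>+v. ennreal (indicator A (exp v) * exp v) \<partial>lborel)"
    by (intro nn_integral_cong) (auto simp: indicator_def)
  also have "\<dots> = (\<integral>\<^sup>+y. ennreal (indicator A y * indicator {0<..} y) \<partial>lborel)"
    by (rule exp_nn_subst[symmetric]) auto
  also have "\<dots> = emeasure (density lborel (\<lambda>y. ennreal (indicator {0<..} y))) A"
    by (subst emeasure_density) (auto intro!: nn_integral_cong simp: indicator_def)
  finally show "emeasure (distr (density lborel (\<lambda>v. ennreal (exp v))) borel exp) A = emeasure (density lborel (\<lambda>y. ennreal (indicator {0<..} y))) A" .
qed simp

lemma exp_subst:
  fixes F :: "real \<Rightarrow> 'b::{banach, second_countable_topology}"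
  assumes [measurable]: "F \<in> borel_measurable borel"
  shows "integrable lborel (\<lambda>v. exp v *\<^sub>R F (exp v)) \<longleftrightarrow> set_integrable lborel {0<..} F"
    and "(LINT v|lborel. exp v *\<^sub>R F (exp v)) = (LINT y:{0<..}|lborel. F y)"
proof -
  have "integrable lborel (\<lambda>v. exp v *\<^sub>R F (exp v)) \<longleftrightarrow> integrable (density lborel (\<lambda>v. ennreal (exp v))) (\<lambda>v. F (exp v))"
    by (subst integrable_density) auto
  also have "\<dots> \<longleftrightarrow> integrable (distr (density lborel (\<lambda>v. ennreal (exp v))) borel exp) F"
    by (subst integrable_distr_eq) auto
  also have "\<dots> \<longleftrightarrow> integrable (density lborel (\<lambda>y. ennreal (indicator {0<..} y))) F"
    by (simp add: exp_measure_eq)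
  also have "\<dots> \<longleftrightarrow> set_integrable lborel {0<..} F"
    unfolding set_integrable_def by (subst integrable_density) auto
  finally show "integrable lborel (\<lambda>v. exp v *\<^sub>R F (exp v)) \<longleftrightarrow> set_integrable lborel {0<..} F" .
  have "(LINT v|lborel. exp v *\<^sub>R F (exp v)) = integral\<^sup>L (density lborel (\<lambda>v. ennreal (exp v))) (\<lambda>v. F (exp v))"
    by (subst integral_density) auto
  also have "\<dots> = integral\<^sup>L (distr (density lborel (\<lambda>v. ennreal (exp v))) borel exp) F"
    by (subst integral_distr) auto
  also have "\<dots> = integral\<^sup>L (density lborel (\<lambda>y. ennreal (indicator {0<..} y))) F"
    by (simp add: exp_measure_eq)
  also have "\<dots> = (LINT y:{0<..}|lborel. F y)"
    unfolding set_lebesgue_integral_def by (subst integral_density) auto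
  finally show "(LINT v|lborel. exp v *\<^sub>R F (exp v)) = (LINT y:{0<..}|lborel. F y)" .
qed



locale stab =
  fixes g :: real and p :: "real \<Rightarrow> real \<Rightarrow> real"
  assumes g0: "0 < g" and g1: "g < 1"
    and dens: "stable_subordinator_density g p"
begin

lemma p_meas[measurable]: "t > 0 \<Longrightarrow> p t \<in> borel_measurable borel"
  using dens unfolding stable_subordinator_density_def by auto
lemma p_nn: "t > 0 \<Longrightarrow> 0 \<le> p t y"
  using dens unfolding stable_subordinator_density_def by auto
lemma p_int: "t > 0 \<Longrightarrow> integrable lborel (p t)"
  using dens unfolding stable_subordinator_density_def by auto
lemma p_one: "t > 0 \<Longrightarrow> (LINT y|lborel. p t y) = 1"
  using dens unfolding stable_subordinator_density_def by auto
lemma p_lap_int: "t > 0 \<Longrightarrow> s > 0 \<Longrightarrow> integrable lborel (\<lambda>y. exp (- s * y) * p t y)"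
  using dens unfolding stable_subordinator_density_def by auto
lemma p_lap: "t > 0 \<Longrightarrow> s > 0 \<Longrightarrow> (LINT y|lborel. exp (- s * y) * p t y) = exp (- t * s powr g)"
  using dens unfolding stable_subordinator_density_def by auto

lemma p_support: assumes t: "t > 0" shows "AE y in lborel. y \<le> 0 \<longrightarrow> p t y = 0"
proof -
  define h where "h y = (- y) * indicator {..<0} y * p t y" for y :: real
  have h_meas[measurable]: "h \<in> borel_measurable borel" unfolding h_def using t by measurable
  have h_nn: "0 \<le> h y" for y using p_nn[OF t, of y] by (auto simp: h_def indicator_def mult_nonpos_nonneg)
  have hle: "s * h y \<le> exp (- s * y) * p t y" if "s > 0" for s y
  proof (cases "y < 0")
    case True
    have "- s * y \<le> exp (- s * y)" using exp_ge_add_one_self[of "- s * y"] by linarith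
    then have "(- s * y) * p t y \<le> exp (- s * y) * p t y" using p_nn[OF t, of y] by (rule mult_right_mono)
    then show ?thesis using True by (simp add: h_def algebra_simps)
  next
    case False then show ?thesis using p_nn[OF t, of y] by (simp add: h_def)
  qed
  have h_int: "integrable lborel h"
    by (rule Bochner_Integration.integrable_bound[OF p_lap_int[OF t zero_less_one]]) (use hle[of 1] h_nn p_nn[OF t] in auto)
  have bound: "s * (LINT y|lborel. h y) \<le> 1" if "s > 0" for s
  proof -
    have "s * (LINT y|lborel. h y) = (LINT y|lborel. s * h y)" using h_int by simp
    also have "\<dots> \<le> (LINT y|lborel. exp (- s * y) * p t y)"
      by (intro integral_mono integrable_mult_right h_int p_lap_int t that hle)
    also have "\<dots> \<le> 1" using p_lap[OF t that] t by simp
    finally show ?thesis .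
  qed
  have "(LINT y|lborel. h y) = 0"
  proof (rule ccontr)
    assume ne: "(LINT y|lborel. h y) \<noteq> 0"
    have "0 \<le> (LINT y|lborel. h y)" using h_nn by simp
    with ne have pos: "0 < (LINT y|lborel. h y)" by simp
    from bound[of "2 / (LINT y|lborel. h y)"] pos show False by simp
  qed
  then have "AE y in lborel. h y = 0" using integral_nonneg_eq_0_iff_AE[OF h_int] h_nn by simp
  then show ?thesis using AE_lborel_singleton[of 0]
    by eventually_elim (auto simp: h_def)
qed

end


lemma laplace_unique:
  fixes f1 f2 :: "real \<Rightarrow> real"
  assumes m1[measurable]: "f1 \<in> borel_measurable borel" and m2[measurable]: "f2 \<in> borel_measurable borel"
    and n1: "\<And>y. 0 \<le> f1 y" and n2: "\<And>y. 0 \<le> f2 y"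
    and i1: "integrable lborel f1" and i2: "integrable lborel f2"
    and s1: "AE y in lborel. y \<le> 0 \<longrightarrow> f1 y = 0" and s2: "AE y in lborel. y \<le> 0 \<longrightarrow> f2 y = 0"
    and tot: "(LINT y|lborel. f1 y) = (LINT y|lborel. f2 y)"
    and li1: "\<And>s. s > 0 \<Longrightarrow> integrable lborel (\<lambda>y. exp (- s * y) * f1 y)"
    and li2: "\<And>s. s > 0 \<Longrightarrow> integrable lborel (\<lambda>y. exp (- s * y) * f2 y)"
    and lap: "\<And>s. s > 0 \<Longrightarrow> (LINT y|lborel. exp (- s * y) * f1 y) = (LINT y|lborel. exp (- s * y) * f2 y)"
  shows "AE y in lborel. f1 y = f2 y"
proof -
  define w where "w y = exp (- max 0 y)" for y :: real
  have w_meas[measurable]: "w \<in> borel_measurable borel" unfolding w_def by measurable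
  have w_cont: "continuous_on UNIV w" unfolding w_def by (intro continuous_intros)
  have w_pos: "0 < w y" and w_le1: "w y \<le> 1" for y by (auto simp: w_def)
  have int_bdd: "integrable lborel (\<lambda>y. h y * f y)"
    if "h \<in> borel_measurable borel" "\<And>y. \<bar>h y\<bar> \<le> B" "integrable lborel f" "f \<in> borel_measurable borel" "\<And>y. 0 \<le> f y"
    for h f :: "real \<Rightarrow> real" and B
  proof (rule Bochner_Integration.integrable_bound[of _ "\<lambda>y. B * f y"])
    show "integrable lborel (\<lambda>y. B * f y)" using that by simp
    show "(\<lambda>y. h y * f y) \<in> borel_measurable lborel" using that by simp
    show "AE y in lborel. norm (h y * f y) \<le> norm (B * f y)"
    proof (intro AE_I2)
      fix y
      have "\<bar>h y\<bar> * f y \<le> B * f y" using that by (intro mult_right_mono) auto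
      moreover have "0 \<le> B" using that(2)[of y] by linarith
      ultimately show "norm (h y * f y) \<le> norm (B * f y)" using that(5)[of y] by (simp add: abs_mult)
    qed
  qed
  have mom: "(LINT y|lborel. w y ^ n * f1 y) = (LINT y|lborel. w y ^ n * f2 y)" for n :: nat
  proof (cases "n = 0")
    case True then show ?thesis using tot by simp
  next
    case False
    have e1: "(LINT y|lborel. w y ^ n * f1 y) = (LINT y|lborel. exp (- real n * y) * f1 y)"
      by (rule integral_cong_AE) (use s1 in \<open>auto elim!: eventually_mono simp: w_def exp_of_nat_mult[symmetric] max_def\<close>)
    have e2: "(LINT y|lborel. w y ^ n * f2 y) = (LINT y|lborel. exp (- real n * y) * f2 y)"
      by (rule integral_cong_AE) (use s2 in \<open>auto elim!: eventually_mono simp: w_def exp_of_nat_mult[symmetric] max_def\<close>)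
    show ?thesis unfolding e1 e2 using False by (intro lap) auto
  qed
  have cont: "(LINT y|lborel. \<phi> (w y) * f1 y) = (LINT y|lborel. \<phi> (w y) * f2 y)"
    if phi: "continuous_on {0..1} \<phi>" for \<phi> :: "real \<Rightarrow> real"
  proof -
    have cw: "continuous_on UNIV (\<lambda>y. \<phi> (w y))"
      by (rule continuous_on_compose2[OF phi w_cont]) (auto simp: w_le1 w_pos less_imp_le)
    then have [measurable]: "(\<lambda>y. \<phi> (w y)) \<in> borel_measurable borel"
      by (rule borel_measurable_continuous_onI)
    obtain B where B: "\<And>u. u \<in> {0..1} \<Longrightarrow> \<bar>\<phi> u\<bar> \<le> B"
      using compact_imp_bounded[OF compact_continuous_image[OF phi compact_Icc]]
      by (auto simp: bounded_iff) (meson atLeastAtMost_iff)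
    have Bw: "\<bar>\<phi> (w y)\<bar> \<le> B" for y using B w_pos w_le1 by (simp add: less_imp_le)
    have I1: "integrable lborel (\<lambda>y. \<phi> (w y) * f1 y)" by (rule int_bdd[OF _ Bw i1 m1 n1]) simp
    have I2: "integrable lborel (\<lambda>y. \<phi> (w y) * f2 y)" by (rule int_bdd[OF _ Bw i2 m2 n2]) simp
    define T where "T = (LINT y|lborel. f1 y)"
    have T0: "0 \<le> T" unfolding T_def using n1 by simp
    have close: "\<bar>(LINT y|lborel. \<phi> (w y) * f1 y) - (LINT y|lborel. \<phi> (w y) * f2 y)\<bar> \<le> 2 * e * T"
      if e: "e > 0" for e
    proof -
      obtain P where P: "real_polynomial_function P" "\<And>u. u \<in> {0..1} \<Longrightarrow> \<bar>\<phi> u - P u\<bar> < e"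
        using Stone_Weierstrass_real_polynomial_function[OF compact_Icc phi e] by blast
      obtain a N where aN: "P = (\<lambda>x. \<Sum>i\<le>N. a i * x ^ i)" using P(1) real_polynomial_function_imp_sum by blast
      have mi1: "integrable lborel (\<lambda>y. w y ^ i * f1 y)" for i
        by (rule int_bdd[OF _ _ i1 m1 n1, of _ 1]) (auto simp: w_pos w_le1 less_imp_le power_le_one)
      have mi2: "integrable lborel (\<lambda>y. w y ^ i * f2 y)" for i
        by (rule int_bdd[OF _ _ i2 m2 n2, of _ 1]) (auto simp: w_pos w_le1 less_imp_le power_le_one)
      have Peq: "(LINT y|lborel. P (w y) * f1 y) = (LINT y|lborel. P (w y) * f2 y)"
      proof -
        have "(LINT y|lborel. P (w y) * f1 y) = (LINT y|lborel. (\<Sum>i\<le>N. a i * (w y ^ i * f1 y)))"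
          by (simp add: aN sum_distrib_right mult.assoc)
        also have "\<dots> = (\<Sum>i\<le>N. a i * (LINT y|lborel. w y ^ i * f1 y))"
          by (subst Bochner_Integration.integral_sum) (auto intro: mi1)
        also have "\<dots> = (\<Sum>i\<le>N. a i * (LINT y|lborel. w y ^ i * f2 y))" by (simp add: mom)
        also have "\<dots> = (LINT y|lborel. (\<Sum>i\<le>N. a i * (w y ^ i * f2 y)))"
          by (subst Bochner_Integration.integral_sum) (auto intro: mi2)
        also have "\<dots> = (LINT y|lborel. P (w y) * f2 y)"
          by (simp add: aN sum_distrib_right mult.assoc)
        finally show ?thesis .
      qed
      have Pm[measurable]: "(\<lambda>y. P (w y)) \<in> borel_measurable borel"
        unfolding aN by measurable
      have approx: "\<bar>(LINT y|lborel. \<phi> (w y) * f y) - (LINT y|lborel. P (w y) * f y)\<bar> \<le> e * (LINT y|lborel. f y)"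
        if f: "f \<in> borel_measurable borel" "\<And>y. 0 \<le> f y" "integrable lborel f"
          "integrable lborel (\<lambda>y. \<phi> (w y) * f y)" for f
      proof -
        have dle: "\<bar>\<phi> (w y) - P (w y)\<bar> \<le> e" for y using P(2)[of "w y"] w_pos w_le1 by (simp add: less_imp_le)
        have PI: "integrable lborel (\<lambda>y. P (w y) * f y)"
        proof -
          have "integrable lborel (\<lambda>y. (\<phi> (w y) - P (w y)) * f y)"
            by (rule int_bdd[OF _ dle f(3) f(1) f(2)]) simp
          then have "integrable lborel (\<lambda>y. \<phi> (w y) * f y - (\<phi> (w y) - P (w y)) * f y)"
            using f(4) by simp
          then show ?thesis by (simp add: algebra_simps)
        qed
        have "\<bar>(LINT y|lborel. \<phi> (w y) * f y) - (LINT y|lborel. P (w y) * f y)\<bar>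
             = \<bar>LINT y|lborel. (\<phi> (w y) - P (w y)) * f y\<bar>"
          using PI f(4) by (simp add: left_diff_distrib)
        also have "\<dots> \<le> (LINT y|lborel. \<bar>(\<phi> (w y) - P (w y)) * f y\<bar>)"
          by (rule integral_abs_bound)
        also have "\<dots> \<le> (LINT y|lborel. e * f y)"
        proof (rule integral_mono)
          show "integrable lborel (\<lambda>y. \<bar>(\<phi> (w y) - P (w y)) * f y\<bar>)"
            by (intro integrable_abs int_bdd[OF _ dle f(3) f(1) f(2)]) simp
          show "integrable lborel (\<lambda>y. e * f y)" using f by simp
          show "\<bar>(\<phi> (w y) - P (w y)) * f y\<bar> \<le> e * f y" for y
            using dle[of y] f(2)[of y] by (simp add: abs_mult mult_right_mono)
        qed
        finally show ?thesis by simp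
      qed
      have a1: "\<bar>(LINT y|lborel. \<phi> (w y) * f1 y) - (LINT y|lborel. P (w y) * f1 y)\<bar> \<le> e * T"
        using approx[OF m1 n1 i1 I1] by (simp add: T_def)
      have a2: "\<bar>(LINT y|lborel. \<phi> (w y) * f2 y) - (LINT y|lborel. P (w y) * f2 y)\<bar> \<le> e * T"
        using approx[OF m2 n2 i2 I2] by (simp add: T_def tot)
      show ?thesis using a1 a2 Peq by linarith
    qed
    show ?thesis
    proof (rule ccontr)
      assume ne: "(LINT y|lborel. \<phi> (w y) * f1 y) \<noteq> (LINT y|lborel. \<phi> (w y) * f2 y)"
      define D where "D = \<bar>(LINT y|lborel. \<phi> (w y) * f1 y) - (LINT y|lborel. \<phi> (w y) * f2 y)\<bar>"
      have D0: "D > 0" using ne by (simp add: D_def)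
      have "D \<le> 2 * (D / (4 * (T + 1))) * T" unfolding D_def
        by (rule close) (use D0 T0 in \<open>simp add: D_def\<close>)
      also have "\<dots> = D / 2 * (T / (T + 1))" using T0 by (simp add: field_simps)
      also have "\<dots> < D"
      proof -
        have "T / (T + 1) < 1" using T0 by simp
        then have "D / 2 * (T / (T + 1)) \<le> D / 2 * 1" using D0 T0 by (intro mult_left_mono) auto
        then show ?thesis using D0 by linarith
      qed
      finally show False by simp
    qed
  qed
  have tail: "(LINT y|lborel. indicator {a<..} y * f1 y) = (LINT y|lborel. indicator {a<..} y * f2 y)" for a :: real
  proof (cases "a < 0")
    case True
    have "(LINT y|lborel. indicator {a<..} y * f1 y) = (LINT y|lborel. f1 y)"
      by (rule integral_cong_AE) (use s1 True in \<open>auto elim!: eventually_mono simp: indicator_def\<close>)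
    moreover have "(LINT y|lborel. indicator {a<..} y * f2 y) = (LINT y|lborel. f2 y)"
      by (rule integral_cong_AE) (use s2 True in \<open>auto elim!: eventually_mono simp: indicator_def\<close>)
    ultimately show ?thesis using tot by simp
  next
    case False
    define c where "c = exp (- a)"
    define \<phi> where "\<phi> k u = max 0 (min 1 (real k * (c - u)))" for k :: nat and u :: real
    have phic: "continuous_on {0..1} (\<phi> k)" for k unfolding \<phi>_def by (intro continuous_intros)
    have phim[measurable]: "(\<lambda>y. \<phi> k (w y)) \<in> borel_measurable borel" for k
      unfolding \<phi>_def by measurable
    have lim: "(\<lambda>k. \<phi> k (w y) * f y) \<longlonglongrightarrow> indicator {a<..} y * f y" for y and f :: "real \<Rightarrow> real"
    proof (cases "a < y")
      case True
      then have "w y < c" using False by (simp add: w_def c_def max_def)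
      then obtain K :: nat where K: "1 / (c - w y) \<le> real K" using real_arch_simple by blast
      have "\<phi> k (w y) = 1" if "k \<ge> K" for k
      proof -
        have "1 / (c - w y) \<le> real k" using K that by linarith
        then have "1 \<le> real k * (c - w y)" using \<open>w y < c\<close> by (simp add: field_simps)
        then show ?thesis by (simp add: \<phi>_def)
      qed
      then have "eventually (\<lambda>k. \<phi> k (w y) * f y = indicator {a<..} y * f y) sequentially"
        using True by (auto simp: eventually_sequentially)
      then show ?thesis by (rule tendsto_eventually)
    next
      case False2: False
      then have "c \<le> w y" using False by (simp add: w_def c_def max_def)
      then have kk: "real k * (c - w y) \<le> 0" for k by (simp add: mult_nonneg_nonpos)
      have "\<phi> k (w y) = 0" for k using kk[of k] unfolding \<phi>_def by linarith
      then show ?thesis using False2 by simp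
    qed
    have bnd: "norm (\<phi> k (w y) * f y) \<le> f y" if "\<And>y. 0 \<le> f y" for k y and f :: "real \<Rightarrow> real"
      using that[of y] by (simp add: \<phi>_def abs_mult mult_left_le_one_le)
    have "(\<lambda>k. LINT y|lborel. \<phi> k (w y) * f1 y) \<longlonglongrightarrow> (LINT y|lborel. indicator {a<..} y * f1 y)"
      by (rule integral_dominated_convergence[where w=f1]) (use i1 lim bnd n1 in auto)
    moreover have "(\<lambda>k. LINT y|lborel. \<phi> k (w y) * f2 y) \<longlonglongrightarrow> (LINT y|lborel. indicator {a<..} y * f2 y)"
      by (rule integral_dominated_convergence[where w=f2]) (use i2 lim bnd n2 in auto)
    moreover have "(LINT y|lborel. \<phi> k (w y) * f1 y) = (LINT y|lborel. \<phi> k (w y) * f2 y)" for k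
      by (rule cont[OF phic])
    ultimately show ?thesis using LIMSEQ_unique by auto
  qed
  have em: "emeasure (density lborel f) {a<..} = ennreal (LINT y|lborel. indicator {a<..} y * f y)"
    if "f \<in> borel_measurable borel" "\<And>y. 0 \<le> f y" "integrable lborel f" for f :: "real \<Rightarrow> real" and a
  proof -
    have "emeasure (density lborel f) {a<..} = (\<integral>\<^sup>+y. ennreal (indicator {a<..} y * f y) \<partial>lborel)"
      using that by (subst emeasure_density) (auto intro!: nn_integral_cong simp: indicator_def)
    also have "\<dots> = ennreal (LINT y|lborel. indicator {a<..} y * f y)"
      using that integrable_real_mult_indicator[of "{a<..}" lborel f] by (intro nn_integral_eq_integral) (auto simp: mult.commute)
    finally show ?thesis .
  qed
  have "density lborel f1 = density lborel f2"
  proof (rule measure_eqI_lessThan)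
    show "emeasure (density lborel f1) {x<..} < \<infinity>" for x using em[OF m1 n1 i1] by simp
    show "emeasure (density lborel f1) {x<..} = emeasure (density lborel f2) {x<..}" for x
      using em[OF m1 n1 i1] em[OF m2 n2 i2] tail by simp
  qed auto
  then have "AE y in lborel. ennreal (f1 y) = ennreal (f2 y)"
    by (subst (asm) sigma_finite_measure.density_unique_iff[OF sigma_finite_lborel]) auto
  then show ?thesis using n1 n2 by (auto elim!: eventually_mono)
qed



context stab begin

definition q :: "real \<Rightarrow> real \<Rightarrow> real" where
  "q t y = t powr (-1/g) * p 1 (t powr (-1/g) * y)"

lemma q_meas[measurable]: "q t \<in> borel_measurable borel"
  unfolding q_def by (measurable; simp add: p_meas)

lemma scale_ae: assumes t: "t > 0" shows "AE y in lborel. p t y = q t y"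
proof -
  define c where "c = t powr (-1/g)"
  have c0: "c > 0" using t by (simp add: c_def)
  have qc: "q t y = c * p 1 (c * y)" for y by (simp add: q_def c_def)
  have r_int: "integrable lborel (\<lambda>y. p 1 (0 + c * y))"
    using lborel_integrable_real_affine[OF p_int[of 1], of c 0] c0 by simp
  show ?thesis
  proof (rule laplace_unique)
    show "p t \<in> borel_measurable borel" using t by simp
    show "q t \<in> borel_measurable borel" by simp
    show "0 \<le> p t y" for y using p_nn[OF t] .
    show "0 \<le> q t y" for y using p_nn[of 1] c0 by (simp add: qc)
    show "integrable lborel (p t)" using p_int[OF t] .
    show "integrable lborel (q t)" using r_int by (simp add: qc[abs_def])
    show "AE y in lborel. y \<le> 0 \<longrightarrow> p t y = 0" using p_support[OF t] .
    show "AE y in lborel. y \<le> 0 \<longrightarrow> q t y = 0"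
    proof -
      have "AE y in lborel. 0 + c * y \<le> 0 \<longrightarrow> p 1 (0 + c * y) = 0"
        by (rule AE_borel_affine) (use c0 p_support[of 1] in auto)
      then show ?thesis using c0 by (auto elim!: eventually_mono simp: qc zero_le_mult_iff mult_le_0_iff)
    qed
    have "(LINT y|lborel. p 1 y) = \<bar>c\<bar> *\<^sub>R (LINT y|lborel. p 1 (0 + c * y))"
      by (rule lborel_integral_real_affine) (use c0 in simp)
    then show "(LINT y|lborel. p t y) = (LINT y|lborel. q t y)"
      using c0 p_one[OF t] p_one[of 1] by (simp add: qc)
    fix s :: real assume s: "s > 0"
    show "integrable lborel (\<lambda>y. exp (- s * y) * p t y)" using p_lap_int[OF t s] .
    define f where "f u = exp (- (s / c) * u) * p 1 u" for u
    have fi: "integrable lborel f" unfolding f_def using p_lap_int[of 1 "s / c"] s c0 by simp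
    have fc: "f (0 + c * y) = exp (- s * y) * p 1 (c * y)" for y using c0 by (simp add: f_def)
    have "integrable lborel (\<lambda>y. f (0 + c * y))"
      using lborel_integrable_real_affine[OF fi, of c 0] c0 by simp
    then show "integrable lborel (\<lambda>y. exp (- s * y) * q t y)"
      unfolding fc by (simp add: qc mult.left_commute)
    have "(LINT y|lborel. f y) = \<bar>c\<bar> *\<^sub>R (LINT y|lborel. f (0 + c * y))"
      by (rule lborel_integral_real_affine) (use c0 in simp)
    also have "\<dots> = (LINT y|lborel. exp (- s * y) * q t y)"
      using c0 unfolding fc by (simp add: qc mult.left_commute)
    finally have "(LINT y|lborel. exp (- s * y) * q t y) = (LINT y|lborel. f y)" ..
    also have "\<dots> = exp (- 1 * (s / c) powr g)" unfolding f_def using p_lap[of 1 "s / c"] s c0 by simp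
    also have "(s / c) powr g = t * s powr g"
    proof -
      have "s / c = s * t powr (1 / g)" using t by (simp add: c_def powr_minus divide_inverse)
      then have "(s / c) powr g = s powr g * (t powr (1/g)) powr g" using s t by (simp add: powr_mult)
      also have "(t powr (1/g)) powr g = t" using t g0 by (simp add: powr_powr)
      finally show ?thesis by simp
    qed
    finally show "(LINT y|lborel. exp (- s * y) * p t y) = (LINT y|lborel. exp (- s * y) * q t y)"
      using p_lap[OF t s] by simp
  qed
qed

end


context stab begin

definition rho :: "real \<Rightarrow> real" where "rho w = exp w * p 1 (exp w)"

lemma rho_meas[measurable]: "rho \<in> borel_measurable borel"
  unfolding rho_def by (measurable; simp add: p_meas)

lemma rho_nn: "0 \<le> rho w" using p_nn[of 1] by (simp add: rho_def)

lemma setint_full: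
  fixes F :: "real \<Rightarrow> real"
  assumes "AE y in lborel. y \<le> 0 \<longrightarrow> F y = 0" and [measurable]: "F \<in> borel_measurable borel"
  shows "(LINT y:{0<..}|lborel. F y) = (LINT y|lborel. F y)"
  unfolding set_lebesgue_integral_def
  by (rule integral_cong_AE) (use assms in \<open>auto elim!: eventually_mono simp: indicator_def\<close>)

lemma setint_full_int:
  fixes F :: "real \<Rightarrow> real"
  assumes "AE y in lborel. y \<le> 0 \<longrightarrow> F y = 0" "F \<in> borel_measurable borel"
  shows "set_integrable lborel {0<..} F \<longleftrightarrow> integrable lborel F"
  unfolding set_integrable_def
  by (rule integrable_cong_AE) (use assms in \<open>auto elim!: eventually_mono simp: indicator_def\<close>)

lemma rho_int: "integrable lborel rho" and rho_one: "(LINT w|lborel. rho w) = 1"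
proof -
  have e: "(\<lambda>v. exp v *\<^sub>R p 1 (exp v)) = rho" by (simp add: rho_def fun_eq_iff)
  show "integrable lborel rho"
    using exp_subst(1)[of "p 1"] setint_full_int[OF p_support[of 1]] p_int[of 1] by (simp add: rho_def[abs_def])
  show "(LINT w|lborel. rho w) = 1"
    using exp_subst(2)[of "p 1"] setint_full[OF p_support[of 1]] p_one[of 1] by (simp add: rho_def[abs_def])
qed

lemma rho_lap: assumes s: "s > 0"
  shows "integrable lborel (\<lambda>w. exp (- s * exp w) * rho w)"
    and "(LINT w|lborel. exp (- s * exp w) * rho w) = exp (- (s powr g))"
proof -
  have e: "(\<lambda>v. exp v *\<^sub>R (exp (- s * exp v) * p 1 (exp v))) = (\<lambda>w. exp (- s * exp w) * rho w)"
    by (simp add: rho_def fun_eq_iff)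
  have supp: "AE y in lborel. y \<le> 0 \<longrightarrow> exp (- s * y) * p 1 y = 0"
    using p_support[of 1] by (auto elim!: eventually_mono)
  show "integrable lborel (\<lambda>w. exp (- s * exp w) * rho w)"
    using exp_subst(1)[of "\<lambda>y. exp (- s * y) * p 1 y"] setint_full_int[OF supp] p_lap_int[OF _ s, of 1]
    by (simp add: rho_def mult.left_commute)
  show "(LINT w|lborel. exp (- s * exp w) * rho w) = exp (- (s powr g))"
    using exp_subst(2)[of "\<lambda>y. exp (- s * y) * p 1 y"] setint_full[OF supp] p_lap[OF _ s, of 1]
    by (simp add: rho_def mult.left_commute)
qed

lemma q_rho: assumes t: "t > 0" shows "exp z * q t (exp z) = rho (z - ln t / g)"
proof -
  have a: "t powr (-1/g) * exp z = exp (-(1/g) * ln t) * exp z" using t by (simp add: powr_def)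
  have c: "-(1/g) * ln t + z = z - ln t / g" by (simp add: field_simps)
  have ab: "t powr (-1/g) * exp z = exp (z - ln t / g)" unfolding a by (simp only: mult_exp_exp c)
  show ?thesis unfolding q_def rho_def ab[symmetric] by (simp only: mult_ac)
qed

definition kappa :: "real \<Rightarrow> real" where "kappa u = (LINT z|lborel. rho z * rho (z - u))"

lemma Kker_eq: assumes l1: "l1 > 0" and l2: "l2 > 0"
  shows "Kker p l1 l2 = kappa (ln l2 / g - ln l1 / g) / (l1 * l2)"
proof -
  have [measurable]: "p l1 \<in> borel_measurable borel" "p l2 \<in> borel_measurable borel" using l1 l2 by simp_all
  have "Kker p l1 l2 = (LINT l:{0<..}|lborel. l * (q l1 l / l1) * (q l2 l / l2))"
    unfolding Kker_def set_lebesgue_integral_def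
  proof (rule integral_cong_AE)
    show "AE x in lborel. indicator {0<..} x *\<^sub>R (x * (p l1 x / l1) * (p l2 x / l2)) =
        indicator {0<..} x *\<^sub>R (x * (q l1 x / l1) * (q l2 x / l2))"
      using scale_ae[OF l1] scale_ae[OF l2] by eventually_elim simp
  qed simp_all
  also have "\<dots> = (LINT z|lborel. exp z *\<^sub>R (exp z * (q l1 (exp z) / l1) * (q l2 (exp z) / l2)))"
    by (rule exp_subst(2)[symmetric]) simp
  also have "\<dots> = (LINT z|lborel. rho (z - ln l1 / g) * rho (z - ln l2 / g) / (l1 * l2))"
    by (rule Bochner_Integration.integral_cong) (auto simp: q_rho[OF l1, symmetric] q_rho[OF l2, symmetric])
  also have "\<dots> = (LINT z|lborel. rho (z - ln l1 / g) * rho (z - ln l2 / g)) / (l1 * l2)"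
    by simp
  also have "(LINT z|lborel. rho (z - ln l1 / g) * rho (z - ln l2 / g)) = kappa (ln l2 / g - ln l1 / g)"
  proof -
    have "(LINT z|lborel. rho (z - ln l1 / g) * rho (z - ln l2 / g)) =
          \<bar>1\<bar> *\<^sub>R (LINT z|lborel. rho (ln l1 / g + 1 * z - ln l1 / g) * rho (ln l1 / g + 1 * z - ln l2 / g))"
      by (rule lborel_integral_real_affine[where f="\<lambda>z. rho (z - ln l1 / g) * rho (z - ln l2 / g)"]) simp
    then show ?thesis by (simp add: kappa_def algebra_simps)
  qed
  finally show ?thesis .
qed

end


lemma cis_meas[measurable]: "cis \<in> borel_measurable borel"
  by (intro borel_measurable_continuous_onI) (simp add: cis_conv_exp continuous_intros)

context stab begin

definition Ch :: "real \<Rightarrow> complex" where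
  "Ch s = (LINT w|lborel. complex_of_real (rho w) * cis (s * w))"

lemma rho_nn_int: "(\<integral>\<^sup>+w. ennreal (rho w) \<partial>lborel) = 1"
  using nn_integral_eq_integral[OF rho_int] rho_nn rho_one by simp

lemma conv:
  shows "integrable lborel (\<lambda>u. complex_of_real (kappa u) * cis (s * u))"
    and "(LINT u|lborel. complex_of_real (kappa u) * cis (s * u)) = Ch s * Ch (- s)"
proof -
  define H where "H u z = complex_of_real (rho z * rho (z - u)) * cis (s * u)" for u z
  have Hm[measurable]: "(\<lambda>(u, z). H u z) \<in> borel_measurable (lborel \<Otimes>\<^sub>M lborel)"
    unfolding H_def by measurable
  have inner: "(\<integral>\<^sup>+u. ennreal (rho z * rho (z - u)) \<partial>lborel) = ennreal (rho z)" for z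
  proof -
    have "(\<integral>\<^sup>+u. ennreal (rho z * rho (z - u)) \<partial>lborel) = ennreal (rho z) * (\<integral>\<^sup>+u. ennreal (rho (z - u)) \<partial>lborel)"
      using rho_nn by (subst nn_integral_cmult[symmetric]) (auto simp: ennreal_mult)
    also have "(\<integral>\<^sup>+u. ennreal (rho (z - u)) \<partial>lborel) = (\<integral>\<^sup>+u. ennreal (rho u) \<partial>lborel)"
      using nn_integral_real_affine[of "\<lambda>u. ennreal (rho u)" "-1" z] by simp
    finally show ?thesis by (simp add: rho_nn_int)
  qed
  have Hint: "integrable (lborel \<Otimes>\<^sub>M lborel) (\<lambda>(u, z). H u z)"
  proof (rule integrableI_bounded)
    have "(\<integral>\<^sup>+x. ennreal (norm (case x of (u, z) \<Rightarrow> H u z)) \<partial>(lborel \<Otimes>\<^sub>M lborel))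
        = (\<integral>\<^sup>+z. \<integral>\<^sup>+u. ennreal (norm (H u z)) \<partial>lborel \<partial>lborel)"
      using lborel_pair.nn_integral_snd[of "\<lambda>x. ennreal (norm (case x of (u, z) \<Rightarrow> H u z))"] by simp
    also have "\<dots> = (\<integral>\<^sup>+z. \<integral>\<^sup>+u. ennreal (rho z * rho (z - u)) \<partial>lborel \<partial>lborel)"
      using rho_nn by (simp add: H_def norm_mult)
    also have "\<dots> = 1" by (simp add: inner rho_nn_int)
    finally show "(\<integral>\<^sup>+x. ennreal (norm (case x of (u, z) \<Rightarrow> H u z)) \<partial>(lborel \<Otimes>\<^sub>M lborel)) < \<infinity>" by simp
  qed simp
  have Hu: "(LINT z|lborel. H u z) = complex_of_real (kappa u) * cis (s * u)" for u
    by (simp add: H_def kappa_def del: of_real_mult)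
  show "integrable lborel (\<lambda>u. complex_of_real (kappa u) * cis (s * u))"
    using lborel_pair.integrable_fst[OF Hint] by (simp add: Hu)
  have Hz: "(LINT u|lborel. H u z) = complex_of_real (rho z) * cis (s * z) * Ch (- s)" for z
  proof -
    have "(LINT u|lborel. H u z) = \<bar>-1\<bar> *\<^sub>R (LINT x|lborel. H (z + (-1) * x) z)"
      by (rule lborel_integral_real_affine) simp
    also have "\<dots> = (LINT x|lborel. complex_of_real (rho z) * cis (s * z) * (complex_of_real (rho x) * cis (- s * x)))"
    proof -
      have "H (z + (-1) * x) z = complex_of_real (rho z) * cis (s * z) * (complex_of_real (rho x) * cis (- s * x))" for x
      proof -
        have "cis (s * (z - x)) = cis (s * z) * cis (- s * x)" by (simp add: cis_mult algebra_simps)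
        then show ?thesis by (simp add: H_def)
      qed
      then show ?thesis by simp
    qed
    also have "\<dots> = complex_of_real (rho z) * cis (s * z) * Ch (- s)"
      by (simp add: Ch_def)
    finally show ?thesis .
  qed
  have "(LINT u|lborel. complex_of_real (kappa u) * cis (s * u)) = (LINT u|lborel. LINT z|lborel. H u z)"
    by (simp add: Hu)
  also have "\<dots> = (LINT z|lborel. LINT u|lborel. H u z)"
    using lborel_pair.Fubini_integral[OF Hint] by simp
  also have "\<dots> = (LINT z|lborel. complex_of_real (rho z) * cis (s * z) * Ch (- s))"
    by (simp add: Hz)
  also have "\<dots> = Ch s * Ch (- s)" by (simp add: Ch_def)
  finally show "(LINT u|lborel. complex_of_real (kappa u) * cis (s * u)) = Ch s * Ch (- s)" .
qed

end


lemma gamma_log: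
  fixes z :: complex assumes z: "Re z > 0"
  shows "integrable lborel (\<lambda>w. exp (z * of_real w) * of_real (exp (- exp w)))"
    and "(LINT w|lborel. exp (z * of_real w) * of_real (exp (- exp w))) = Gamma z"
proof -
  define F where "F t = complex_of_real t powr (z - 1) / of_real (exp t)" for t :: real
  have Fm: "(\<lambda>t. indicator {0<..} t *\<^sub>R F t) \<in> borel_measurable borel"
    unfolding F_def
    by (rule borel_measurable_continuous_on_indicator) (auto intro!: continuous_intros simp: complex_nonpos_Reals_iff)
  have Fi_leb: "set_integrable lebesgue {0<..} F"
    using absolutely_integrable_Gamma_integral'[OF z] unfolding F_def[abs_def] .
  have Fi: "set_integrable lborel {0<..} F"
    using Fi_leb Fm unfolding set_integrable_def by (simp add: integrable_completion)
  have "(LINT t:{0<..}|lebesgue. F t) = integral {0<..} F"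
    by (rule set_lebesgue_integral_eq_integral(2)[OF Fi_leb])
  also have "\<dots> = Gamma z" using Gamma_integral_complex'[OF z] unfolding F_def[abs_def] by (rule integral_unique)
  finally have FI: "(LINT t:{0<..}|lborel. F t) = Gamma z"
    using Fm unfolding set_lebesgue_integral_def by (simp add: integral_completion)
  have e: "exp v *\<^sub>R F (exp v) = exp (z * of_real v) * of_real (exp (- exp v))" for v
  proof -
    have "complex_of_real (exp v) powr (z - 1) = exp ((z - 1) * of_real v)"
      by (simp add: powr_def Ln_of_real)
    then have "exp v *\<^sub>R F (exp v) = of_real (exp v) * exp ((z - 1) * of_real v) / of_real (exp (exp v))"
      by (simp add: F_def scaleR_conv_of_real)
    also have "of_real (exp v) * exp ((z - 1) * of_real v) = exp (z * of_real v)"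
    proof -
      have "of_real (exp v) * exp ((z - 1) * of_real v) = exp (of_real v) * exp ((z - 1) * of_real v)"
        by (simp add: exp_of_real)
      also have "\<dots> = exp (of_real v + (z - 1) * of_real v)" by (rule mult_exp_exp)
      also have "of_real v + (z - 1) * of_real v = z * of_real v" by (simp add: algebra_simps)
      finally show ?thesis .
    qed
    finally show ?thesis by (simp add: exp_minus divide_inverse)
  qed
  define F' where "F' t = indicator {0<..} t *\<^sub>R F t" for t
  have Fb: "F' \<in> borel_measurable borel" using Fm unfolding F'_def[abs_def] .
  have e': "exp v *\<^sub>R F' (exp v) = exp (z * of_real v) * of_real (exp (- exp v))" for v
    using e[of v] by (simp add: F'_def)
  have ii: "(\<lambda>t. indicator {0<..} t *\<^sub>R F' t) = (\<lambda>t. indicator {0<..} t *\<^sub>R F t)"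
    by (auto simp: F'_def indicator_def fun_eq_iff)
  have Fi': "set_integrable lborel {0<..} F'" using Fi unfolding set_integrable_def ii .
  have FI': "(LINT t:{0<..}|lborel. F' t) = Gamma z" using FI unfolding set_lebesgue_integral_def ii .
  show "integrable lborel (\<lambda>w. exp (z * of_real w) * of_real (exp (- exp w)))"
    using exp_subst(1)[OF Fb] Fi' by (simp add: e')
  show "(LINT w|lborel. exp (z * of_real w) * of_real (exp (- exp w))) = Gamma z"
    using exp_subst(2)[OF Fb] FI' by (simp add: e')
qed

lemma Re_pos_not_nonpos_Int: "Re (z::complex) > 0 \<Longrightarrow> z \<notin> \<int>\<^sub>\<le>\<^sub>0"
  by (auto elim!: nonpos_Ints_cases)

context stab begin

definition Mo :: "complex \<Rightarrow> complex" where
  "Mo z = (LINT w|lborel. complex_of_real (rho w) * exp (- (z * of_real w)))"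

lemma moment:
  fixes z :: complex assumes z: "Re z > 0"
  shows "integrable lborel (\<lambda>w. complex_of_real (rho w) * exp (- (z * of_real w)))"
    and "Gamma z * Mo z = Gamma (z / of_real g) / of_real g"
proof -
  define \<sigma> where "\<sigma> = Re z"
  have sg: "\<sigma> / g > 0" using z g0 by (simp add: \<sigma>_def)
  have aux: "integrable lborel (\<lambda>v. exp (\<sigma> * v) * exp (- exp (g * v)))"
  proof -
    have "integrable lborel (\<lambda>u. exp (complex_of_real (\<sigma> / g) * of_real u) * of_real (exp (- exp u)))"
      by (rule gamma_log(1)) (use sg in simp)
    then have "integrable lborel (\<lambda>u. complex_of_real (exp (\<sigma> / g * u) * exp (- exp u)))"
      by (simp add: exp_of_real[symmetric] del: exp_of_real)
    then have i1: "integrable lborel (\<lambda>u. exp (\<sigma> / g * u) * exp (- exp u))"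
      by (subst complex_of_real_integrable_eq[symmetric])
    have "integrable lborel (\<lambda>v. (\<lambda>u. exp (\<sigma> / g * u) * exp (- exp u)) (0 + g * v))"
      by (rule lborel_integrable_real_affine[OF i1]) (use g0 in simp)
    then show ?thesis using g0 by simp
  qed
  define H where "H v w = exp (z * of_real v) * complex_of_real (exp (- exp (v + w)) * rho w)" for v w :: real
  have Hm[measurable]: "(\<lambda>(v, w). H v w) \<in> borel_measurable (lborel \<Otimes>\<^sub>M lborel)"
    unfolding H_def by measurable
  have inner_nn: "(\<integral>\<^sup>+w. ennreal (norm (H v w)) \<partial>lborel) = ennreal (exp (\<sigma> * v) * exp (- exp (g * v)))" for v
  proof -
    have "(\<integral>\<^sup>+w. ennreal (norm (H v w)) \<partial>lborel) = (\<integral>\<^sup>+w. ennreal (exp (\<sigma> * v)) * ennreal (exp (- exp v * exp w) * rho w) \<partial>lborel)"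
      using rho_nn by (intro nn_integral_cong) (simp add: H_def norm_mult \<sigma>_def exp_add ennreal_mult[symmetric] abs_mult)
    also have "\<dots> = ennreal (exp (\<sigma> * v)) * (\<integral>\<^sup>+w. ennreal (exp (- exp v * exp w) * rho w) \<partial>lborel)"
      by (rule nn_integral_cmult) measurable
    also have "(\<integral>\<^sup>+w. ennreal (exp (- exp v * exp w) * rho w) \<partial>lborel) = ennreal (exp (- (exp v powr g)))"
      using nn_integral_eq_integral[OF rho_lap(1)[of "exp v"]] rho_lap(2)[of "exp v"] rho_nn by simp
    also have "exp v powr g = exp (g * v)" by (simp add: powr_def)
    finally show ?thesis by (simp add: ennreal_mult)
  qed
  have Hint: "integrable (lborel \<Otimes>\<^sub>M lborel) (\<lambda>(v, w). H v w)"
  proof (rule integrableI_bounded)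
    have "(\<integral>\<^sup>+x. ennreal (norm (case x of (v, w) \<Rightarrow> H v w)) \<partial>(lborel \<Otimes>\<^sub>M lborel))
        = (\<integral>\<^sup>+v. \<integral>\<^sup>+w. ennreal (norm (H v w)) \<partial>lborel \<partial>lborel)"
      using lborel.nn_integral_fst[of "\<lambda>x. ennreal (norm (case x of (v, w) \<Rightarrow> H v w))" lborel] by simp
    also have "\<dots> = (\<integral>\<^sup>+v. ennreal (exp (\<sigma> * v) * exp (- exp (g * v))) \<partial>lborel)"
      by (simp add: inner_nn)
    also have "\<dots> = ennreal (LINT v|lborel. exp (\<sigma> * v) * exp (- exp (g * v)))"
      by (rule nn_integral_eq_integral[OF aux]) simp
    finally show "(\<integral>\<^sup>+x. ennreal (norm (case x of (v, w) \<Rightarrow> H v w)) \<partial>(lborel \<Otimes>\<^sub>M lborel)) < \<infinity>" by simp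
  qed simp
  have Hv: "(LINT v|lborel. H v w) = complex_of_real (rho w) * exp (- (z * of_real w)) * Gamma z" for w
  proof -
    have "(LINT v|lborel. H v w) = \<bar>1\<bar> *\<^sub>R (LINT x|lborel. H (- w + 1 * x) w)"
      by (rule lborel_integral_real_affine) simp
    also have "\<dots> = (LINT x|lborel. complex_of_real (rho w) * exp (- (z * of_real w)) * (exp (z * of_real x) * of_real (exp (- exp x))))"
    proof -
      have "H (- w + 1 * x) w = complex_of_real (rho w) * exp (- (z * of_real w)) * (exp (z * of_real x) * of_real (exp (- exp x)))" for x
      proof -
        have "exp (z * of_real (- w + x)) = exp (- (z * of_real w)) * exp (z * of_real x)"
          by (simp add: mult_exp_exp algebra_simps)
        then show ?thesis by (simp add: H_def)
      qed
      then show ?thesis by simp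
    qed
    also have "\<dots> = complex_of_real (rho w) * exp (- (z * of_real w)) * Gamma z"
      using gamma_log(2)[OF z] by simp
    finally show ?thesis .
  qed
  have Hw: "(LINT w|lborel. H v w) = exp (z * of_real v) * of_real (exp (- exp (g * v)))" for v
  proof -
    have "(LINT w|lborel. H v w) = exp (z * of_real v) * of_real (LINT w|lborel. exp (- exp v * exp w) * rho w)"
      by (simp add: H_def exp_add del: of_real_mult)
    also have "(LINT w|lborel. exp (- exp v * exp w) * rho w) = exp (- (exp v powr g))"
      by (rule rho_lap(2)) simp
    also have "exp v powr g = exp (g * v)" by (simp add: powr_def)
    finally show ?thesis .
  qed
  have "integrable lborel (\<lambda>w. LINT v|lborel. H v w)"
    using lborel_pair.integrable_snd[OF Hint] .
  then have "integrable lborel (\<lambda>w. complex_of_real (rho w) * exp (- (z * of_real w)) * Gamma z / Gamma z)"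
    unfolding Hv by (rule integrable_divide)
  moreover have "Gamma z \<noteq> 0" by (rule Gamma_nonzero[OF Re_pos_not_nonpos_Int[OF z]])
  ultimately show "integrable lborel (\<lambda>w. complex_of_real (rho w) * exp (- (z * of_real w)))"
    by simp
  have "Gamma z * Mo z = (LINT w|lborel. LINT v|lborel. H v w)"
    by (simp add: Hv Mo_def mult.commute)
  also have "\<dots> = (LINT v|lborel. LINT w|lborel. H v w)"
    using lborel_pair.Fubini_integral[OF Hint] by simp
  also have "\<dots> = (LINT v|lborel. exp (z * of_real v) * of_real (exp (- exp (g * v))))"
    by (simp add: Hw)
  also have "\<dots> = \<bar>1/g\<bar> *\<^sub>R (LINT u|lborel. exp (z * of_real (0 + 1/g * u)) * of_real (exp (- exp (g * (0 + 1/g * u)))))"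
    by (rule lborel_integral_real_affine) (use g0 in simp)
  also have "(LINT u|lborel. exp (z * of_real (0 + 1/g * u)) * of_real (exp (- exp (g * (0 + 1/g * u)))))
      = (LINT u|lborel. exp ((z / of_real g) * of_real u) * of_real (exp (- exp u)))"
    using g0 by (intro Bochner_Integration.integral_cong) (auto simp: field_simps)
  also have "\<dots> = Gamma (z / of_real g)"
    by (rule gamma_log(2)) (use z g0 in simp)
  finally show "Gamma z * Mo z = Gamma (z / of_real g) / of_real g"
    using g0 by (simp add: scaleR_conv_of_real divide_inverse mult.commute)
qed

end



lemma Im_nz_not_nonpos_Int: "Im (z::complex) \<noteq> 0 \<Longrightarrow> z \<notin> \<int>\<^sub>\<le>\<^sub>0"
  by (auto elim!: nonpos_Ints_cases)

context stab begin

lemma Ch_Gamma: assumes s: "s \<noteq> 0"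
  shows "Ch s = Gamma (- (\<i> * of_real s) / of_real g) / (of_real g * Gamma (- (\<i> * of_real s)))"
proof -
  define \<zeta> where "\<zeta> = - (\<i> * complex_of_real s)"
  define zn where "zn n = complex_of_real (inverse (real (Suc n))) + \<zeta>" for n
  have zn_re: "Re (zn n) > 0" for n by (simp add: zn_def \<zeta>_def)
  have zlim: "zn \<longlonglongrightarrow> \<zeta>"
    unfolding zn_def using tendsto_add[OF tendsto_of_real[OF LIMSEQ_inverse_real_of_nat] tendsto_const[of \<zeta>]] by simp
  have Ch_Mo: "Ch s = Mo \<zeta>"
    unfolding Ch_def Mo_def \<zeta>_def
    by (intro Bochner_Integration.integral_cong) (auto simp: cis_conv_exp algebra_simps)
  have m1: "integrable lborel (\<lambda>w. rho w * exp (- w))"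
  proof -
    have "integrable lborel (\<lambda>w. complex_of_real (rho w) * exp (- (1 * of_real w)))"
      by (rule moment(1)) simp
    then have "integrable lborel (\<lambda>w. complex_of_real (rho w * exp (- w)))"
      by (simp add: exp_of_real[symmetric] del: exp_of_real)
    then show ?thesis by (subst complex_of_real_integrable_eq[symmetric])
  qed
  have lim1: "(\<lambda>n. Mo (zn n)) \<longlonglongrightarrow> Mo \<zeta>"
    unfolding Mo_def
  proof (rule integral_dominated_convergence[where w="\<lambda>w. rho w + rho w * exp (- w)"])
    show "integrable lborel (\<lambda>w. rho w + rho w * exp (- w))" using rho_int m1 by simp
    show "AE w in lborel. (\<lambda>n. complex_of_real (rho w) * exp (- (zn n * of_real w))) \<longlonglongrightarrow> complex_of_real (rho w) * exp (- (\<zeta> * of_real w))"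
      by (intro AE_I2 tendsto_intros zlim)
    fix n
    show "AE w in lborel. norm (complex_of_real (rho w) * exp (- (zn n * of_real w))) \<le> rho w + rho w * exp (- w)"
    proof (intro AE_I2)
      fix w :: real
      define a where "a = inverse (real (Suc n))"
      have a: "0 < a" "a \<le> 1" by (auto simp: a_def field_simps)
      have "exp (- (a * w)) \<le> 1 + exp (- w)"
      proof (cases "w \<ge> 0")
        case True
        then have "exp (- (a * w)) \<le> 1" using a by simp
        then show ?thesis by (smt (verit) exp_gt_zero)
      next
        case False
        then have "- (a * w) \<le> - w" using a by (simp add: mult_le_cancel_right1)
        then have "exp (- (a * w)) \<le> exp (- w)" by (simp only: exp_le_cancel_iff)
        then show ?thesis using exp_gt_zero[of 1] by linarith
      qed
      then have "rho w * exp (- (a * w)) \<le> rho w * (1 + exp (- w))" using rho_nn by (intro mult_left_mono) auto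
      moreover have "norm (complex_of_real (rho w) * exp (- (zn n * of_real w))) = rho w * exp (- (a * w))"
      proof -
        have "zn n * of_real w = complex_of_real (a * w) - \<i> * of_real (s * w)"
          by (simp add: zn_def \<zeta>_def a_def algebra_simps)
        then have "Re (zn n * of_real w) = a * w" by simp
        then show ?thesis using rho_nn[of w] by (simp add: norm_mult)
      qed
      ultimately show "norm (complex_of_real (rho w) * exp (- (zn n * of_real w))) \<le> rho w + rho w * exp (- w)"
        by (simp add: algebra_simps)
    qed
  qed simp_all
  have Mo_zn: "Mo (zn n) = Gamma (zn n / of_real g) / (of_real g * Gamma (zn n))" for n
  proof -
    have "Gamma (zn n) \<noteq> 0" by (rule Gamma_nonzero[OF Re_pos_not_nonpos_Int[OF zn_re]])
    then show ?thesis using moment(2)[OF zn_re[of n]] g0 by (simp add: field_simps)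
  qed
  have nz1: "\<zeta> \<notin> \<int>\<^sub>\<le>\<^sub>0" using s by (intro Im_nz_not_nonpos_Int) (simp add: \<zeta>_def)
  have nz2: "\<zeta> / of_real g \<notin> \<int>\<^sub>\<le>\<^sub>0" using s g0 by (intro Im_nz_not_nonpos_Int) (simp add: \<zeta>_def)
  have G0: "Gamma \<zeta> \<noteq> 0" by (rule Gamma_nonzero[OF nz1])
  have lim2: "(\<lambda>n. Mo (zn n)) \<longlonglongrightarrow> Gamma (\<zeta> / of_real g) / (of_real g * Gamma \<zeta>)"
    unfolding Mo_zn using G0 g0 by (intro tendsto_intros zlim nz1 nz2) auto
  show ?thesis using LIMSEQ_unique[OF lim1 lim2] Ch_Mo by (simp add: \<zeta>_def)
qed

end


lemma sin_i_real: "sin (\<i> * complex_of_real t) = \<i> * of_real (sinh t)"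
proof -
  have "sinh t = (exp t - inverse (exp t)) / 2" by (simp add: sinh_def exp_minus)
  then have "of_real (sinh t) = -\<i> * sin (\<i> * complex_of_real t)" using sinh_real[of t] by (simp only:)
  then have "\<i> * of_real (sinh t) = \<i> * (-\<i>) * sin (\<i> * complex_of_real t)" by simp
  then show ?thesis by simp
qed

lemma GG: assumes y: "y \<noteq> 0"
  shows "Gamma (\<i> * of_real y) * Gamma (- (\<i> * of_real y)) = of_real (pi / (y * sinh (pi * y)))"
proof -
  have nz: "- (\<i> * complex_of_real y) \<notin> \<int>\<^sub>\<le>\<^sub>0" using y by (intro Im_nz_not_nonpos_Int) simp
  have p1: "Gamma (- (\<i> * of_real y) + 1) = - (\<i> * of_real y) * Gamma (- (\<i> * of_real y))"
    by (rule Gamma_plus1[OF nz])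
  have refl: "Gamma (\<i> * of_real y) * Gamma (1 - \<i> * of_real y) = of_real pi / sin (of_real pi * (\<i> * of_real y))"
    by (rule Gamma_reflection_complex)
  have s: "sin (of_real pi * (\<i> * of_real y)) = \<i> * of_real (sinh (pi * y))"
    using sin_i_real[of "pi * y"] by (simp add: mult_ac)
  have sh: "sinh (pi * y) \<noteq> 0" using y by simp
  have "Gamma (\<i> * of_real y) * Gamma (- (\<i> * of_real y)) * (- (\<i> * of_real y))
      = of_real pi / (\<i> * of_real (sinh (pi * y)))"
    using refl p1 s by (simp add: algebra_simps)
  then show ?thesis using y sh by (simp add: field_simps)
qed

context stab begin

lemma ratio: assumes x: "x \<noteq> 0"
  shows "of_real g * Ch (g * x) * Ch (- (g * x)) = of_real (sinh (g * pi * x) / sinh (pi * x))"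
proof -
  have gx: "g * x \<noteq> 0" using x g0 by simp
  have c1: "Ch (g * x) = Gamma (- (\<i> * of_real x)) / (of_real g * Gamma (- (\<i> * of_real (g * x))))"
    using Ch_Gamma[OF gx] g0 by simp
  have c2: "Ch (- (g * x)) = Gamma (\<i> * of_real x) / (of_real g * Gamma (\<i> * of_real (g * x)))"
    using Ch_Gamma[of "- (g * x)"] gx g0 by simp
  have A: "Gamma (\<i> * of_real x) * Gamma (- (\<i> * of_real x)) = of_real (pi / (x * sinh (pi * x)))"
    by (rule GG[OF x])
  have B: "Gamma (\<i> * of_real (g * x)) * Gamma (- (\<i> * of_real (g * x))) = of_real (pi / ((g * x) * sinh (pi * (g * x))))"
    by (rule GG[OF gx])
  have shx: "sinh (pi * x) \<noteq> 0" using x by simp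
  have shgx: "sinh (pi * (g * x)) \<noteq> 0" using gx by simp
  have "of_real g * Ch (g * x) * Ch (- (g * x))
      = (Gamma (\<i> * of_real x) * Gamma (- (\<i> * of_real x))) /
        (of_real g * (Gamma (\<i> * of_real (g * x)) * Gamma (- (\<i> * of_real (g * x)))))"
    using g0 by (simp add: c1 c2 field_simps)
  also have "\<dots> = of_real ((pi / (x * sinh (pi * x))) / (g * (pi / ((g * x) * sinh (pi * (g * x))))))"
    unfolding A B by simp
  also have "(pi / (x * sinh (pi * x))) / (g * (pi / ((g * x) * sinh (pi * (g * x))))) = sinh (g * pi * x) / sinh (pi * x)"
    using g0 x shx shgx by (simp add: field_simps)
  finally show ?thesis .
qed

lemma kappa_meas[measurable]: "kappa \<in> borel_measurable borel"
proof -
  have "(\<lambda>(u, z). rho z * rho (z - u)) \<in> borel_measurable (borel \<Otimes>\<^sub>M lborel)" by measurable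
  then have "(\<lambda>u. LINT z|lborel. rho z * rho (z - u)) \<in> borel_measurable borel"
    by (rule lborel.borel_measurable_lebesgue_integral[where f="\<lambda>u z. rho z * rho (z - u)"])
  then show ?thesis unfolding kappa_def[abs_def] .
qed

lemma Ch0: "Ch 0 = 1" using rho_one by (simp add: Ch_def)

lemma main: assumes l1: "l1 > 0"
  shows "set_integrable lborel {0<..}
           (\<lambda>l2. complex_of_real (Kker p l1 l2) * (complex_of_real l2) powr (\<i> * complex_of_real x))"
    and "(LINT l2:{0<..}|lborel. complex_of_real (Kker p l1 l2) * (complex_of_real l2) powr (\<i> * complex_of_real x))
       = of_real g * (cis (x * ln l1) / of_real l1) * (Ch (g * x) * Ch (- (g * x)))"
proof -
  define a1 where "a1 = ln l1 / g"
  define \<Psi> where "\<Psi> l2 = complex_of_real (kappa (ln l2 / g - a1) / (l1 * l2)) * cis (x * ln l2)" for l2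
  have \<Psi>m[measurable]: "\<Psi> \<in> borel_measurable borel" unfolding \<Psi>_def by measurable
  have pw: "indicator {0<..} l2 *\<^sub>R (complex_of_real (Kker p l1 l2) * (complex_of_real l2) powr (\<i> * complex_of_real x))
          = indicator {0<..} l2 *\<^sub>R \<Psi> l2" for l2
  proof (cases "l2 > 0")
    case True
    have "(complex_of_real l2) powr (\<i> * complex_of_real x) = cis (x * ln l2)"
      using True by (simp add: powr_def Ln_of_real cis_conv_exp mult_ac)
    then show ?thesis using True l1 by (simp add: Kker_eq \<Psi>_def a1_def)
  qed simp
  define G where "G v = complex_of_real (kappa (v / g - a1) / l1) * cis (x * v)" for v
  have e: "exp v *\<^sub>R \<Psi> (exp v) = G v" for v
    using l1 by (simp add: \<Psi>_def G_def scaleR_conv_of_real)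
  have Gaff: "G (ln l1 + g * u) = (cis (x * ln l1) / of_real l1) * (complex_of_real (kappa u) * cis ((g * x) * u))" for u
  proof -
    have "(ln l1 + g * u) / g - a1 = u" using g0 by (simp add: a1_def field_simps)
    moreover have "cis (x * (ln l1 + g * u)) = cis (x * ln l1) * cis ((g * x) * u)"
      by (simp add: cis_mult algebra_simps)
    ultimately show ?thesis by (simp add: G_def)
  qed
  have ci: "integrable lborel (\<lambda>u. complex_of_real (kappa u) * cis ((g * x) * u))" by (rule conv(1))
  have Gi: "integrable lborel G"
  proof -
    have "integrable lborel (\<lambda>u. G (ln l1 + g * u))" unfolding Gaff using ci by simp
    then show ?thesis using lborel_integrable_real_affine_iff[of g G "ln l1"] g0 by simp
  qed
  have \<Psi>i: "set_integrable lborel {0<..} \<Psi>" using exp_subst(1)[OF \<Psi>m] Gi by (simp add: e)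
  show "set_integrable lborel {0<..}
           (\<lambda>l2. complex_of_real (Kker p l1 l2) * (complex_of_real l2) powr (\<i> * complex_of_real x))"
    using \<Psi>i unfolding set_integrable_def pw .
  have "(LINT l2:{0<..}|lborel. complex_of_real (Kker p l1 l2) * (complex_of_real l2) powr (\<i> * complex_of_real x))
      = (LINT l2:{0<..}|lborel. \<Psi> l2)"
    unfolding set_lebesgue_integral_def pw ..
  also have "\<dots> = (LINT v|lborel. G v)" using exp_subst(2)[OF \<Psi>m] by (simp add: e)
  also have "\<dots> = \<bar>g\<bar> *\<^sub>R (LINT u|lborel. G (ln l1 + g * u))"
    by (rule lborel_integral_real_affine) (use g0 in simp)
  also have "\<dots> = of_real g * (cis (x * ln l1) / of_real l1) * (Ch (g * x) * Ch (- (g * x)))"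
    using g0 conv(2)[of "g * x"] by (simp add: Gaff scaleR_conv_of_real)
  finally show "(LINT l2:{0<..}|lborel. complex_of_real (Kker p l1 l2) * (complex_of_real l2) powr (\<i> * complex_of_real x))
       = of_real g * (cis (x * ln l1) / of_real l1) * (Ch (g * x) * Ch (- (g * x)))" .
qed

end


theorem proposition4p11:
  fixes g :: real and p :: "real \<Rightarrow> real \<Rightarrow> real" and l1 x :: real
  assumes "1/2 < g" and "g < 1"
    and "stable_subordinator_density g p"
    and "0 < l1"
  shows "set_integrable lborel {0<..}
           (\<lambda>l2. complex_of_real (Kker p l1 l2) * (complex_of_real l2) powr (\<i> * complex_of_real x))
    \<and> (LINT l2:{0<..}|lborel. complex_of_real (Kker p l1 l2) * (complex_of_real l2) powr (\<i> * complex_of_real x))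
       = (if x \<noteq> 0
          then complex_of_real (sinh (g * pi * x) / sinh (pi * x)) * (complex_of_real l1) powr (\<i> * complex_of_real x - 1)
          else complex_of_real (g / l1))"
proof -
  interpret stab g p using assms by unfold_locales auto
  note m = main[OF assms(4), of x]
  have pw: "(complex_of_real l1) powr (\<i> * complex_of_real x - 1) = cis (x * ln l1) / of_real l1"
  proof -
    have "(complex_of_real l1) powr (\<i> * complex_of_real x - 1) = exp (\<i> * of_real (x * ln l1) - of_real (ln l1))"
      using assms(4) by (simp add: powr_def Ln_of_real algebra_simps)
    also have "\<dots> = cis (x * ln l1) / of_real l1"
    proof -
      have "exp (complex_of_real (ln l1)) = complex_of_real l1" using assms(4) by (simp add: exp_of_real)
      then show ?thesis by (simp add: exp_diff cis_conv_exp exp_of_real[symmetric] del: exp_of_real)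
    qed
    finally show ?thesis .
  qed
  show ?thesis
  proof (cases "x = 0")
    case True
    then show ?thesis using m by (simp add: Ch0)
  next
    case False
    have "of_real g * (cis (x * ln l1) / of_real l1) * (Ch (g * x) * Ch (- (g * x)))
        = (of_real g * Ch (g * x) * Ch (- (g * x))) * (cis (x * ln l1) / of_real l1)"
      by (simp add: mult_ac)
    also have "\<dots> = complex_of_real (sinh (g * pi * x) / sinh (pi * x)) * (complex_of_real l1) powr (\<i> * complex_of_real x - 1)"
      by (simp add: ratio[OF False] pw)
    finally show ?thesis using m False by simp
  qed
qed


end
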